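(* Let $\mathcal{G}$ be an $N$-player game with finite action spaces $\mathcal{A}^1,\dots,\mathcal{A}^N$ and payoffs $u^i$; let $\varepsilon\ge0$, $s\ge1$, and metrics $d^{-i}$ on $\mathcal{A}^{-i}$ define optimal transport ambiguity sets. For a profile of mixed strategies $(\bar p^1,\dots,\bar p^N)$, the following are equivalent: (1) $(\bar p^1,\dots,\bar p^N)$ is a strategically robust equilibrium of $\mathcal{G}$ with robustness level $\varepsilon$; (2) for every $i\in\{1,\dots,N\}$ there exist $\lambda^i\in\mathbb{R}$, $\xi^i(a^{-i})\in\mathbb{R}$ ($a^{-i}\in\mathcal{A}^{-i}$), $\tau^i\in\mathbb{R}$, $\omega^i(a^i)\in\mathbb{R}$ ($a^i\in\mathcal{A}^i$), $\kappa^i\in\mathbb{R}$, and $\eta^i(a^{-i},\hat a^{-i})\in\mathbb{R}$ ($a^{-i},\hat a^{-i}\in\mathcal{A}^{-i}$) such that $$\omega^i(a^i)+\kappa^i+\sum_{a^{-i}\in\mathcal{A}^{-i}}\sum_{\hat a^{-i}\in\mathcal{A}^{-i}}\eta^i(a^{-i},\hat a^{-i})\,u^i(a^i,\hat a^{-i})=0\quad\forall a^i\in\mathcal{A}^i,$$ $$-\varepsilon^s+\tau^i+\sum_{a^{-i}}\sum_{\hat a^{-i}}\eta^i(a^{-i},\hat a^{-i})\,d^{-i}(a^{-i},\hat a^{-i})^s=0,$$ $$\prod_{j\ne i}\bar p^j(a^j)-\sum_{\hat a^{-i}\in\mathcal{A}^{-i}}\eta^i(a^{-i},\hat a^{-i})=0\quad\forall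 a^{-i}=(a^j)_{j\ne i}\in\mathcal{A}^{-i},$$ and the complementarity conditions $$0\le\tau^i\perp\lambda^i\ge0,\qquad 0\le\omega^i(a^i)\perp\bar p^i(a^i)\ge0\quad\forall a^i\in\mathcal{A}^i,$$ $$0\le\eta^i(a^{-i},\hat a^{-i})\perp\Big(-\xi^i(a^{-i})+\sum_{a^i\in\mathcal{A}^i}u^i(a^i,\hat a^{-i})\bar p^i(a^i)+\lambda^i d^{-i}(a^{-i},\hat a^{-i})^s\Big)\ge0\quad\forall a^{-i},\hat a^{-i}\in\mathcal{A}^{-i}.$$
   Context: $\mathcal{A}^{-i}:=\prod_{j\ne i}\mathcal{A}^j$. Mixed strategies $\bar p^i$ are probability vectors on $\mathcal{A}^i$; $\sigma_{p^{-i}}$ is the product distribution of $(p^j)_{j\ne i}$ on $\mathcal{A}^{-i}$. For a distribution $q$ on $\mathcal{A}^{-i}$, $U^i(p^i,q)=\sum_{a^i,a^{-i}}p^i(a^i)q(a^{-i})u^i(a^i,a^{-i})$. Ambiguity set: $\mathcal{S}^i_\varepsilon(p^{-i})=\{q:W_s(\sigma_{p^{-i}},q)\le\varepsilon\}$ with $W_s(\mu,\nu)=\left(\min_{\gamma\in\Gamma(\mu,\nu)}\sum_{x,y}d^{-i}(x,y)^s\gamma(x,y)\right)^{1/s}$ over couplings $\Gamma(\mu,\nu)$. A profile $(\bar p^1,\dots,\bar p^N)$ is a strategically robust equilibrium with robustness level $\varepsilon$ if for every $i$, $\bar p^i\in\arg\max_{p^i}\min_{q\in\mathcal{S}^i_\varepsilon(\bar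 p^{-i})}U^i(p^i,q)$. The notation $0\le x\perp y\ge0$ means $x\ge0$, $y\ge0$ and $xy=0$. *)

theory Defs
  imports "HOL-Analysis.Analysis"
begin

(* Players are 0..N-1. All actions live in a common type 'a; player i's action
   set is A i. A full action profile is a function nat => 'a. *)

definition opp_profiles :: "nat \<Rightarrow> (nat \<Rightarrow> 'a set) \<Rightarrow> nat \<Rightarrow> (nat \<Rightarrow> 'a) set" where
  "opp_profiles N A i = PiE ({..<N} - {i}) A"

definition is_mixed :: "'b set \<Rightarrow> ('b \<Rightarrow> real) \<Rightarrow> bool" where
  "is_mixed S p \<longleftrightarrow> (\<forall>x\<in>S. p x \<ge> 0) \<and> (\<Sum>x\<in>S. p x) = 1"

definition sigma_opp :: "nat \<Rightarrow> nat \<Rightarrow> (nat \<Rightarrow> 'a \<Rightarrow> real) \<Rightarrow> (nat \<Rightarrow> 'a) \<Rightarrow> real" where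
  "sigma_opp N i p b = (\<Prod>j\<in>{..<N} - {i}. p j (b j))"

definition U :: "nat \<Rightarrow> (nat \<Rightarrow> 'a set) \<Rightarrow> (nat \<Rightarrow> (nat \<Rightarrow> 'a) \<Rightarrow> real) \<Rightarrow> nat
    \<Rightarrow> ('a \<Rightarrow> real) \<Rightarrow> ((nat \<Rightarrow> 'a) \<Rightarrow> real) \<Rightarrow> real" where
  "U N A u i pp q = (\<Sum>a\<in>A i. \<Sum>b\<in>opp_profiles N A i. pp a * q b * u i (b(i := a)))"

definition couplings :: "'b set \<Rightarrow> ('b \<Rightarrow> real) \<Rightarrow> ('b \<Rightarrow> real) \<Rightarrow> ('b \<times> 'b \<Rightarrow> real) set" where
  "couplings S mu nu = {g. (\<forall>x\<in>S. \<forall>y\<in>S. g (x, y) \<ge> 0)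
      \<and> (\<forall>x\<in>S. (\<Sum>y\<in>S. g (x, y)) = mu x) \<and> (\<forall>y\<in>S. (\<Sum>x\<in>S. g (x, y)) = nu y)}"

(* optimal transport (Wasserstein-s) distance on a finite set S with ground metric d;
   the minimum over couplings is attained, so it equals the infimum *)
definition wasserstein :: "'b set \<Rightarrow> ('b \<Rightarrow> 'b \<Rightarrow> real) \<Rightarrow> real \<Rightarrow> ('b \<Rightarrow> real) \<Rightarrow> ('b \<Rightarrow> real) \<Rightarrow> real" where
  "wasserstein S d s mu nu =
     (Inf ((\<lambda>g. \<Sum>x\<in>S. \<Sum>y\<in>S. d x y powr s * g (x, y)) ` couplings S mu nu)) powr (1 / s)"

definition ambiguity_set :: "nat \<Rightarrow> (nat \<Rightarrow> 'a set) \<Rightarrow> (nat \<Rightarrow> (nat \<Rightarrow> 'a) \<Rightarrow> (nat \<Rightarrow> 'a) \<Rightarrow> real)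
    \<Rightarrow> real \<Rightarrow> real \<Rightarrow> nat \<Rightarrow> (nat \<Rightarrow> 'a \<Rightarrow> real) \<Rightarrow> ((nat \<Rightarrow> 'a) \<Rightarrow> real) set" where
  "ambiguity_set N A d s eps i p =
     {q. is_mixed (opp_profiles N A i) q \<and>
         wasserstein (opp_profiles N A i) (d i) s (sigma_opp N i p) q \<le> eps}"

definition robust_value :: "nat \<Rightarrow> (nat \<Rightarrow> 'a set) \<Rightarrow> (nat \<Rightarrow> (nat \<Rightarrow> 'a) \<Rightarrow> real)
    \<Rightarrow> (nat \<Rightarrow> (nat \<Rightarrow> 'a) \<Rightarrow> (nat \<Rightarrow> 'a) \<Rightarrow> real) \<Rightarrow> real \<Rightarrow> real \<Rightarrow> nat
    \<Rightarrow> (nat \<Rightarrow> 'a \<Rightarrow> real) \<Rightarrow> ('a \<Rightarrow> real) \<Rightarrow> real" where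
  "robust_value N A u d s eps i p pp = Inf ((\<lambda>q. U N A u i pp q) ` ambiguity_set N A d s eps i p)"

definition strategically_robust_eq :: "nat \<Rightarrow> (nat \<Rightarrow> 'a set) \<Rightarrow> (nat \<Rightarrow> (nat \<Rightarrow> 'a) \<Rightarrow> real)
    \<Rightarrow> (nat \<Rightarrow> (nat \<Rightarrow> 'a) \<Rightarrow> (nat \<Rightarrow> 'a) \<Rightarrow> real) \<Rightarrow> real \<Rightarrow> real
    \<Rightarrow> (nat \<Rightarrow> 'a \<Rightarrow> real) \<Rightarrow> bool" where
  "strategically_robust_eq N A u d s eps p \<longleftrightarrow>
     (\<forall>i<N. is_mixed (A i) (p i) \<and>
        (\<forall>pp. is_mixed (A i) pp \<longrightarrow>
           robust_value N A u d s eps i p pp \<le> robust_value N A u d s eps i p (p i)))"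

definition perp :: "real \<Rightarrow> real \<Rightarrow> bool" where
  "perp x y \<longleftrightarrow> x \<ge> 0 \<and> y \<ge> 0 \<and> x * y = 0"

definition metric_on :: "'b set \<Rightarrow> ('b \<Rightarrow> 'b \<Rightarrow> real) \<Rightarrow> bool" where
  "metric_on S d \<longleftrightarrow> (\<forall>x\<in>S. \<forall>y\<in>S. d x y \<ge> 0 \<and> (d x y = 0 \<longleftrightarrow> x = y) \<and> d x y = d y x)
     \<and> (\<forall>x\<in>S. \<forall>y\<in>S. \<forall>z\<in>S. d x z \<le> d x y + d y z)"

end

theory Submission
  imports Defs
begin


lemma farkas_cone:
  fixes a :: "'i \<Rightarrow> 'j \<Rightarrow> real" and bv :: "'j \<Rightarrow> real"
  assumes "finite I" "finite J"
  shows "(\<exists>\<mu>. (\<forall>i\<in>I. \<mu> i \<ge> 0) \<and> (\<forall>j\<in>J. bv j = (\<Sum>i\<in>I. \<mu> i * a i j))) \<or>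
         (\<exists>y. (\<forall>i\<in>I. (\<Sum>j\<in>J. y j * a i j) \<ge> 0) \<and> (\<Sum>j\<in>J. y j * bv j) < 0)"
  using assms(1)
proof (induction I arbitrary: a bv rule: finite_induct)
  case empty
  show ?case
  proof (cases "\<forall>j\<in>J. bv j = 0")
    case True then show ?thesis by auto
  next
    case False
    then obtain j0 where j0: "j0 \<in> J" "bv j0 \<noteq> 0" by auto
    have "(\<Sum>j\<in>J. bv j * bv j) > 0"
      by (rule sum_pos2[OF assms(2) j0(1)]) (use j0 in \<open>auto simp: zero_less_mult_iff\<close>)
    then have "(\<Sum>j\<in>J. (- bv j) * bv j) < 0" by (simp add: sum_negf)
    then show ?thesis by (intro disjI2 exI[where x="\<lambda>j. - bv j"]) simp
  qed
next
  case (insert m I)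
  from insert.IH[where a=a and bv=bv] show ?case
  proof
    assume "\<exists>\<mu>. (\<forall>i\<in>I. \<mu> i \<ge> 0) \<and> (\<forall>j\<in>J. bv j = (\<Sum>i\<in>I. \<mu> i * a i j))"
    then obtain \<mu> where \<mu>: "\<forall>i\<in>I. \<mu> i \<ge> 0" "\<forall>j\<in>J. bv j = (\<Sum>i\<in>I. \<mu> i * a i j)" by blast
    have "(\<Sum>i\<in>I. (\<mu>(m := 0)) i * a i j) = (\<Sum>i\<in>I. \<mu> i * a i j)" for j
      by (rule sum.cong) (use insert.hyps in auto)
    then have "\<forall>j\<in>J. bv j = (\<Sum>i\<in>insert m I. (\<mu>(m := 0)) i * a i j)"
      using \<mu> insert.hyps by (simp add: sum.insert)
    moreover have "\<forall>i\<in>insert m I. (\<mu>(m := 0)) i \<ge> 0" using \<mu> by auto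
    ultimately show ?thesis by blast
  next
    assume "\<exists>y. (\<forall>i\<in>I. (\<Sum>j\<in>J. y j * a i j) \<ge> 0) \<and> (\<Sum>j\<in>J. y j * bv j) < 0"
    then obtain y where y: "\<forall>i\<in>I. (\<Sum>j\<in>J. y j * a i j) \<ge> 0" "(\<Sum>j\<in>J. y j * bv j) < 0" by blast
    define ym where "ym = (\<Sum>j\<in>J. y j * a m j)"
    show ?thesis
    proof (cases "ym \<ge> 0")
      case True
      then have "\<forall>i\<in>insert m I. (\<Sum>j\<in>J. y j * a i j) \<ge> 0" using y ym_def by auto
      then show ?thesis using y by blast
    next
      case False
      then have ym: "ym < 0" by simp
      define ya where "ya i = (\<Sum>j\<in>J. y j * a i j)" for i
      define yb where "yb = (\<Sum>j\<in>J. y j * bv j)"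
      define a' where "a' i j = ym * a i j - ya i * a m j" for i j
      define bv' where "bv' j = ym * bv j - yb * a m j" for j
      from insert.IH[where a=a' and bv=bv'] show ?thesis
      proof
        assume "\<exists>\<mu>. (\<forall>i\<in>I. \<mu> i \<ge> 0) \<and> (\<forall>j\<in>J. bv' j = (\<Sum>i\<in>I. \<mu> i * a' i j))"
        then obtain \<mu> where \<mu>: "\<forall>i\<in>I. \<mu> i \<ge> 0" "\<forall>j\<in>J. bv' j = (\<Sum>i\<in>I. \<mu> i * a' i j)" by blast
        define t where "t = (yb - (\<Sum>i\<in>I. \<mu> i * ya i)) / ym"
        have sp: "(\<Sum>i\<in>I. \<mu> i * ya i) \<ge> 0"
          using \<mu>(1) y(1) by (auto intro!: sum_nonneg simp: ya_def)
        have yb: "yb < 0" using y(2) yb_def by simp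
        have t: "t \<ge> 0" unfolding t_def using ym yb sp
          by (intro divide_nonpos_neg) auto
        have eq: "bv j = (\<Sum>i\<in>I. \<mu> i * a i j) + t * a m j" if j: "j \<in> J" for j
        proof -
          have "bv' j = (\<Sum>i\<in>I. \<mu> i * a' i j)" using \<mu>(2) j by blast
          also have "\<dots> = ym * (\<Sum>i\<in>I. \<mu> i * a i j) - (\<Sum>i\<in>I. \<mu> i * ya i) * a m j"
            by (simp add: a'_def algebra_simps sum_subtractf sum_distrib_left sum_distrib_right)
          finally have "ym * bv j = ym * (\<Sum>i\<in>I. \<mu> i * a i j) + (yb - (\<Sum>i\<in>I. \<mu> i * ya i)) * a m j"
            by (simp add: bv'_def algebra_simps)
          then show ?thesis using ym unfolding t_def by (simp add: field_simps)
        qed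
        have "(\<Sum>i\<in>I. (\<mu>(m := t)) i * a i j) = (\<Sum>i\<in>I. \<mu> i * a i j)" for j
          by (rule sum.cong) (use insert.hyps in auto)
        then have "\<forall>j\<in>J. bv j = (\<Sum>i\<in>insert m I. (\<mu>(m := t)) i * a i j)"
          using eq insert.hyps by (simp add: sum.insert)
        moreover have "\<forall>i\<in>insert m I. (\<mu>(m := t)) i \<ge> 0" using \<mu> t by auto
        ultimately show ?thesis by blast
      next
        assume "\<exists>z. (\<forall>i\<in>I. (\<Sum>j\<in>J. z j * a' i j) \<ge> 0) \<and> (\<Sum>j\<in>J. z j * bv' j) < 0"
        then obtain z where z: "\<forall>i\<in>I. (\<Sum>j\<in>J. z j * a' i j) \<ge> 0" "(\<Sum>j\<in>J. z j * bv' j) < 0" by blast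
        define zm where "zm = (\<Sum>j\<in>J. z j * a m j)"
        define w where "w j = ym * z j - zm * y j" for j
        have lin: "(\<Sum>j\<in>J. w j * f j) = ym * (\<Sum>j\<in>J. z j * f j) - zm * (\<Sum>j\<in>J. y j * f j)" for f
          by (simp add: w_def algebra_simps sum_subtractf sum_distrib_left)
        have lin2: "(\<Sum>j\<in>J. z j * (ym * f j - c * a m j)) = ym * (\<Sum>j\<in>J. z j * f j) - c * zm" for f c
          by (simp add: zm_def algebra_simps sum_subtractf sum_distrib_left)
        have "\<forall>i\<in>insert m I. (\<Sum>j\<in>J. w j * a i j) \<ge> 0"
        proof
          fix i assume i: "i \<in> insert m I"
          show "(\<Sum>j\<in>J. w j * a i j) \<ge> 0"
          proof (cases "i = m")
            case True then show ?thesis by (simp add: lin ym_def zm_def)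
          next
            case False
            then have "i \<in> I" using i by auto
            then have h: "(\<Sum>j\<in>J. z j * a' i j) \<ge> 0" using z by blast
            have "(\<Sum>j\<in>J. z j * a' i j) = ym * (\<Sum>j\<in>J. z j * a i j) - ya i * zm"
              using lin2[of "a i" "ya i"] by (simp add: a'_def)
            then show ?thesis using h by (simp add: lin ya_def algebra_simps)
          qed
        qed
        moreover have "(\<Sum>j\<in>J. w j * bv j) < 0"
        proof -
          have "(\<Sum>j\<in>J. z j * bv' j) = ym * (\<Sum>j\<in>J. z j * bv j) - yb * zm"
            using lin2[of bv yb] by (simp add: bv'_def)
          moreover have "(\<Sum>j\<in>J. w j * bv j) = ym * (\<Sum>j\<in>J. z j * bv j) - zm * yb"
            unfolding yb_def by (rule lin)
          ultimately show ?thesis using z(2) by (simp add: algebra_simps)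
        qed
        ultimately show ?thesis by blast
      qed
    qed
  qed
qed

lemma sum_option_split:
  assumes "finite J"
  shows "(\<Sum>z\<in>insert None (Some ` J). f z) = f None + (\<Sum>j\<in>J. f (Some j))"
  using assms by (simp add: sum.reindex)

lemma farkas_ineq:
  fixes a :: "'k \<Rightarrow> 'j \<Rightarrow> real" and \<beta> :: "'k \<Rightarrow> real"
  assumes K: "finite K" and J: "finite J"
    and nf: "\<not>(\<exists>x. \<forall>k\<in>K. (\<Sum>j\<in>J. a k j * x j) \<le> \<beta> k)"
  shows "\<exists>y. (\<forall>k\<in>K. y k \<ge> 0) \<and> (\<forall>j\<in>J. (\<Sum>k\<in>K. y k * a k j) = 0) \<and> (\<Sum>k\<in>K. y k * \<beta> k) < 0"
proof -
  define a' where "a' k ww = (case ww of None \<Rightarrow> \<beta> k | Some j \<Rightarrow> a k j)" for k ww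
  define bv where "bv (ww::'j option) = (case ww of None \<Rightarrow> -1 | Some j \<Rightarrow> (0::real))" for ww
  have J': "finite (insert None (Some ` J))" using J by simp
  from farkas_cone[OF K J', where bv=bv and a=a'] show ?thesis
  proof
    assume "\<exists>\<mu>. (\<forall>i\<in>K. \<mu> i \<ge> 0) \<and> (\<forall>j\<in>insert None (Some ` J). bv j = (\<Sum>i\<in>K. \<mu> i * a' i j))"
    then obtain \<mu> where \<mu>: "\<forall>i\<in>K. \<mu> i \<ge> 0" "\<forall>j\<in>insert None (Some ` J). bv j = (\<Sum>i\<in>K. \<mu> i * a' i j)" by blast
    have "\<forall>j\<in>J. (\<Sum>k\<in>K. \<mu> k * a k j) = 0"
    proof
      fix j assume "j \<in> J"
      then have "bv (Some j) = (\<Sum>i\<in>K. \<mu> i * a' i (Some j))" using \<mu>(2) by blast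
      then show "(\<Sum>k\<in>K. \<mu> k * a k j) = 0" unfolding bv_def a'_def by simp
    qed
    moreover have "(\<Sum>k\<in>K. \<mu> k * \<beta> k) < 0"
    proof -
      have "bv None = (\<Sum>i\<in>K. \<mu> i * a' i None)" using \<mu>(2) by blast
      then show ?thesis unfolding bv_def a'_def by simp
    qed
    ultimately show ?thesis using \<mu>(1) by blast
  next
    assume "\<exists>y. (\<forall>i\<in>K. (\<Sum>j\<in>insert None (Some ` J). y j * a' i j) \<ge> 0) \<and> (\<Sum>j\<in>insert None (Some ` J). y j * bv j) < 0"
    then obtain y where y: "\<forall>i\<in>K. (\<Sum>j\<in>insert None (Some ` J). y j * a' i j) \<ge> 0"
        "(\<Sum>j\<in>insert None (Some ` J). y j * bv j) < 0" by blast
    have t: "y None > 0" using y(2) sum_option_split[OF J, of "\<lambda>j. y j * bv j"] by (simp add: bv_def)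
    define x where "x j = - y (Some j) / y None" for j
    have "\<forall>k\<in>K. (\<Sum>j\<in>J. a k j * x j) \<le> \<beta> k"
    proof
      fix k assume "k \<in> K"
      then have h: "y None * \<beta> k + (\<Sum>j\<in>J. y (Some j) * a k j) \<ge> 0"
        using bspec[OF y(1) \<open>k \<in> K\<close>] sum_option_split[OF J, of "\<lambda>j. y j * a' k j"] by (simp add: a'_def)
      have "(\<Sum>j\<in>J. a k j * x j) = - (\<Sum>j\<in>J. y (Some j) * a k j) / y None"
        by (simp add: x_def sum_divide_distrib sum_negf algebra_simps)
      also have "\<dots> \<le> \<beta> k" by (subst pos_divide_le_eq[OF t]) (use h in \<open>simp add: algebra_simps\<close>)
      finally show "(\<Sum>j\<in>J. a k j * x j) \<le> \<beta> k" .
    qed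
    with nf show ?thesis by blast
  qed
qed

lemma farkas_lin:
  fixes L :: "'k \<Rightarrow> ('j \<Rightarrow> real) \<Rightarrow> real" and \<beta> :: "'k \<Rightarrow> real"
  assumes K: "finite K" and J: "finite J"
    and rep: "\<forall>k\<in>K. \<forall>x. L k x = (\<Sum>j\<in>J. a k j * x j)"
    and nf: "\<not>(\<exists>x. \<forall>k\<in>K. L k x \<le> \<beta> k)"
  shows "\<exists>y. (\<forall>k\<in>K. y k \<ge> 0) \<and> (\<forall>x. (\<Sum>k\<in>K. y k * L k x) = 0) \<and> (\<Sum>k\<in>K. y k * \<beta> k) < 0"
proof -
  have "\<not>(\<exists>x. \<forall>k\<in>K. (\<Sum>j\<in>J. a k j * x j) \<le> \<beta> k)" using nf rep by auto
  from farkas_ineq[OF K J this] obtain y where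
    y: "\<forall>k\<in>K. y k \<ge> 0" "\<forall>j\<in>J. (\<Sum>k\<in>K. y k * a k j) = 0" "(\<Sum>k\<in>K. y k * \<beta> k) < 0" by blast
  have "(\<Sum>k\<in>K. y k * L k x) = 0" for x
  proof -
    have "(\<Sum>k\<in>K. y k * L k x) = (\<Sum>k\<in>K. y k * (\<Sum>j\<in>J. a k j * x j))"
      using rep by (intro sum.cong) auto
    also have "\<dots> = (\<Sum>j\<in>J. x j * (\<Sum>k\<in>K. y k * a k j))"
      by (simp add: sum_distrib_left sum_distrib_right algebra_simps sum.swap[of _ K])
    also have "\<dots> = 0" using y(2) by simp
    finally show ?thesis .
  qed
  then show ?thesis using y(1,3) by blast
qed




lemma sum_K_split:
  assumes "finite S"
  shows "(\<Sum>k\<in>insert None (insert (Some None) (Some ` Some ` (S \<times> S))). f k)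
     = f None + f (Some None) + (\<Sum>b\<in>S. \<Sum>b'\<in>S. f (Some (Some (b, b'))))"
proof -
  have inj: "inj_on (\<lambda>p. Some (Some p)) (S \<times> S)" by (auto simp: inj_on_def)
  have eq: "Some ` Some ` (S \<times> S) = (\<lambda>p. Some (Some p)) ` (S \<times> S)" by auto
  have "(\<Sum>k\<in>Some ` Some ` (S \<times> S). f k) = (\<Sum>p\<in>S \<times> S. f (Some (Some p)))"
    unfolding eq by (subst sum.reindex[OF inj]) simp
  also have "\<dots> = (\<Sum>b\<in>S. \<Sum>b'\<in>S. f (Some (Some (b, b'))))"
    by (simp add: sum.cartesian_product)
  moreover have "None \<notin> Some ` Some ` (S \<times> S)" "Some None \<notin> Some ` Some ` (S \<times> S)" by auto
  moreover have "finite (Some ` Some ` (S \<times> S))" using assms by simp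
  ultimately show ?thesis by (simp add: sum.insert add.assoc)
qed

lemma sum_if_eq_mult: "finite S \<Longrightarrow> b0 \<in> S \<Longrightarrow> (\<Sum>b\<in>S. f b * (if b = b0 then 1 else 0)) = (f b0 :: real)"
  by (simp add: if_distrib[of "\<lambda>z. f _ * z"] cong: if_cong)


lemma sum_if_eq_mult2: "finite S \<Longrightarrow> b0 \<in> S \<Longrightarrow> (\<Sum>b\<in>S. f b * (if b0 = b then 1 else 0)) = (f b0 :: real)"
  by (simp add: if_distrib[of "\<lambda>z. f _ * z"] cong: if_cong)

datatype ('b, 'c) gen = GE 'b 'b | GTau | GW 'c | GKp | GKm | GR
datatype ('b, 'c) crd = CA 'c | CC | CB 'b | CO

definition Iset :: "'b set \<Rightarrow> 'c set \<Rightarrow> ('b, 'c) gen set" where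
  "Iset S Ai = insert GTau (insert GKp (insert GKm (insert GR (GW ` Ai \<union> (\<lambda>(b, b'). GE b b') ` (S \<times> S)))))"

definition Jset :: "'b set \<Rightarrow> 'c set \<Rightarrow> ('b, 'c) crd set" where
  "Jset S Ai = insert CC (insert CO (CA ` Ai \<union> CB ` S))"

lemma sum_I_split:
  fixes f :: "('b, 'c) gen \<Rightarrow> real"
  assumes "finite S" "finite Ai"
  shows "(\<Sum>i\<in>Iset S Ai. f i) = (\<Sum>b\<in>S. \<Sum>b'\<in>S. f (GE b b')) + f GTau + (\<Sum>x\<in>Ai. f (GW x)) + f GKp + f GKm + f GR"
proof -
  have inj: "inj_on (\<lambda>(b, b'). GE b b') (S \<times> S)" by (auto simp: inj_on_def)
  have s1: "(\<Sum>i\<in>(\<lambda>(b, b'). GE b b') ` (S \<times> S). f i) = (\<Sum>b\<in>S. \<Sum>b'\<in>S. f (GE b b'))"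
    by (subst sum.reindex[OF inj]) (simp add: sum.cartesian_product split_def)
  have s2: "(\<Sum>i\<in>GW ` Ai. f i) = (\<Sum>x\<in>Ai. f (GW x))"
    by (subst sum.reindex) (auto simp: inj_on_def)
  have s3: "(\<Sum>i\<in>GW ` Ai \<union> (\<lambda>(b, b'). GE b b') ` (S \<times> S). f i)
      = (\<Sum>i\<in>GW ` Ai. f i) + (\<Sum>i\<in>(\<lambda>(b, b'). GE b b') ` (S \<times> S). f i)"
    by (rule sum.union_disjoint) (use assms in auto)
  have fin: "finite (GW ` Ai \<union> (\<lambda>(b, b'). GE b b') ` (S \<times> S))" using assms by simp
  have nm: "GTau \<notin> insert GKp (insert GKm (insert GR (GW ` Ai \<union> (\<lambda>(b, b'). GE b b') ` (S \<times> S))))"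
    "GKp \<notin> insert GKm (insert GR (GW ` Ai \<union> (\<lambda>(b, b'). GE b b') ` (S \<times> S)))"
    "GKm \<notin> insert GR (GW ` Ai \<union> (\<lambda>(b, b'). GE b b') ` (S \<times> S))"
    "GR \<notin> GW ` Ai \<union> (\<lambda>(b, b'). GE b b') ` (S \<times> S)" by auto
  show ?thesis unfolding Iset_def using fin
    using nm by (simp add: s1 s2 s3 add_ac)
qed

lemma sum_J_split:
  fixes f :: "('b, 'c) crd \<Rightarrow> real"
  assumes "finite S" "finite Ai"
  shows "(\<Sum>j\<in>Jset S Ai. f j) = (\<Sum>x\<in>Ai. f (CA x)) + f CC + (\<Sum>b\<in>S. f (CB b)) + f CO"
proof -
  have s1: "(\<Sum>i\<in>CA ` Ai. f i) = (\<Sum>x\<in>Ai. f (CA x))"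
    by (subst sum.reindex) (auto simp: inj_on_def)
  have s2: "(\<Sum>i\<in>CB ` S. f i) = (\<Sum>x\<in>S. f (CB x))"
    by (subst sum.reindex) (auto simp: inj_on_def)
  have s3: "(\<Sum>i\<in>CA ` Ai \<union> CB ` S. f i) = (\<Sum>i\<in>CA ` Ai. f i) + (\<Sum>i\<in>CB ` S. f i)"
    by (rule sum.union_disjoint) (use assms in auto)
  have fin: "finite (CA ` Ai \<union> CB ` S)" using assms by simp
  have nm: "CC \<notin> insert CO (CA ` Ai \<union> CB ` S)" "CO \<notin> CA ` Ai \<union> CB ` S" by auto
  show ?thesis unfolding Jset_def using fin
    using nm by (simp add: s1 s2 s3 add_ac)
qed

locale rob =
  fixes S :: "'b set" and Ai :: "'c set" and sg :: "'b \<Rightarrow> real" and c :: "'b \<Rightarrow> 'b \<Rightarrow> real"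
    and E :: real and uu :: "'c \<Rightarrow> 'b \<Rightarrow> real" and Amb :: "('b \<Rightarrow> real) set"
  assumes finS: "finite S" and finA: "finite Ai"
    and sg_nn: "\<forall>b\<in>S. sg b \<ge> 0" and sg_sum: "(\<Sum>b\<in>S. sg b) = 1"
    and c_nn: "\<forall>b\<in>S. \<forall>b'\<in>S. c b b' \<ge> 0" and c_diag: "\<forall>b\<in>S. c b b = 0"
    and E_nn: "E \<ge> 0"
    and amb_mixed: "\<And>q. q \<in> Amb \<Longrightarrow> (\<forall>b\<in>S. q b \<ge> 0) \<and> (\<Sum>b\<in>S. q b) = 1"
    and amb_approx: "\<And>q \<delta>. q \<in> Amb \<Longrightarrow> \<delta> > 0 \<Longrightarrow> \<exists>g. (\<forall>x\<in>S. \<forall>y\<in>S. g x y \<ge> 0)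
        \<and> (\<forall>x\<in>S. (\<Sum>y\<in>S. g x y) = sg x) \<and> (\<forall>y\<in>S. (\<Sum>x\<in>S. g x y) = q y)
        \<and> (\<Sum>x\<in>S. \<Sum>y\<in>S. c x y * g x y) \<le> E + \<delta>"
    and amb_intro: "\<And>g. (\<forall>x\<in>S. \<forall>y\<in>S. g x y \<ge> 0) \<Longrightarrow> (\<forall>x\<in>S. (\<Sum>y\<in>S. g x y) = sg x)
        \<Longrightarrow> (\<Sum>x\<in>S. \<Sum>y\<in>S. c x y * g x y) \<le> E \<Longrightarrow> (\<lambda>y. \<Sum>x\<in>S. g x y) \<in> Amb"
begin

definition UU :: "('c \<Rightarrow> real) \<Rightarrow> ('b \<Rightarrow> real) \<Rightarrow> real" where
  "UU pp q = (\<Sum>a\<in>Ai. \<Sum>b\<in>S. pp a * q b * uu a b)"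

definition v :: "('c \<Rightarrow> real) \<Rightarrow> 'b \<Rightarrow> real" where
  "v pp b = (\<Sum>a\<in>Ai. uu a b * pp a)"

definition RV :: "('c \<Rightarrow> real) \<Rightarrow> real" where
  "RV pp = Inf (UU pp ` Amb)"

lemma UU_eq: "UU pp q = (\<Sum>b\<in>S. q b * v pp b)"
proof -
  have "(\<Sum>b\<in>S. q b * v pp b) = (\<Sum>b\<in>S. \<Sum>a\<in>Ai. pp a * q b * uu a b)"
    by (simp add: v_def sum_distrib_left mult_ac)
  also have "\<dots> = (\<Sum>a\<in>Ai. \<Sum>b\<in>S. pp a * q b * uu a b)" by (rule sum.swap)
  finally show ?thesis by (simp add: UU_def)
qed

lemma Amb_ne: "Amb \<noteq> {}"
proof -
  define g where "g x y = (if x = y then sg x else 0)" for x y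
  have "(\<lambda>y. \<Sum>x\<in>S. g x y) \<in> Amb"
  proof (rule amb_intro)
    show "\<forall>x\<in>S. \<forall>y\<in>S. g x y \<ge> 0" using sg_nn by (auto simp: g_def)
    show "\<forall>x\<in>S. (\<Sum>y\<in>S. g x y) = sg x" using finS by (simp add: g_def)
    have "(\<Sum>x\<in>S. \<Sum>y\<in>S. c x y * g x y) = (\<Sum>x\<in>S. c x x * sg x)"
      using finS by (simp add: g_def if_distrib cong: if_cong)
    also have "\<dots> = 0" using c_diag by simp
    finally show "(\<Sum>x\<in>S. \<Sum>y\<in>S. c x y * g x y) \<le> E" using E_nn by simp
  qed
  then show ?thesis by blast
qed

lemma q_le1: "q \<in> Amb \<Longrightarrow> b \<in> S \<Longrightarrow> q b \<le> 1"
  using amb_mixed[of q] member_le_sum[of b S q] finS by auto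

lemma bdd: "bdd_below (UU pp ` Amb)"
proof
  fix z assume "z \<in> UU pp ` Amb"
  then obtain q where q: "q \<in> Amb" "z = UU pp q" by blast
  have "(\<Sum>a\<in>Ai. \<Sum>b\<in>S. - \<bar>pp a * uu a b\<bar>) \<le> (\<Sum>a\<in>Ai. \<Sum>b\<in>S. pp a * q b * uu a b)"
  proof (intro sum_mono)
    fix a b assume b: "b \<in> S"
    have q0: "0 \<le> q b" "q b \<le> 1" using amb_mixed[OF q(1)] q_le1[OF q(1) b] b by auto
    show "- \<bar>pp a * uu a b\<bar> \<le> pp a * q b * uu a b"
    proof (cases "pp a * uu a b \<ge> 0")
      case True
      then have "0 \<le> q b * (pp a * uu a b)" using q0 by simp
      then show ?thesis using True by (simp add: algebra_simps)
    next
      case False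
      then have "1 * (pp a * uu a b) \<le> q b * (pp a * uu a b)"
        using q0 by (intro mult_right_mono_neg) auto
      then show ?thesis using False by (simp add: algebra_simps)
    qed
  qed
  then show "(\<Sum>a\<in>Ai. \<Sum>b\<in>S. - \<bar>pp a * uu a b\<bar>) \<le> z" using q by (simp add: UU_def)
qed

lemma weak:
  assumes q: "q \<in> Amb" and lam: "lam \<ge> 0"
    and feas: "\<forall>b\<in>S. \<forall>b'\<in>S. xi b - lam * c b b' \<le> v pp b'"
  shows "(\<Sum>b\<in>S. sg b * xi b) - lam * E \<le> UU pp q"
proof (rule field_le_epsilon)
  fix e :: real assume e: "e > 0"
  define \<delta> where "\<delta> = e / (lam + 1)"
  have \<delta>: "\<delta> > 0" using e lam by (simp add: \<delta>_def)
  have le: "lam * \<delta> \<le> e"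
  proof -
    have "lam * \<delta> = e * (lam / (lam + 1))" by (simp add: \<delta>_def)
    also have "\<dots> \<le> e * 1" using e lam by (intro mult_left_mono) auto
    finally show ?thesis by simp
  qed
  obtain g where g: "\<forall>x\<in>S. \<forall>y\<in>S. g x y \<ge> 0" "\<forall>x\<in>S. (\<Sum>y\<in>S. g x y) = sg x"
      "\<forall>y\<in>S. (\<Sum>x\<in>S. g x y) = q y" "(\<Sum>x\<in>S. \<Sum>y\<in>S. c x y * g x y) \<le> E + \<delta>"
    using amb_approx[OF q \<delta>] by blast
  have "UU pp q = (\<Sum>y\<in>S. (\<Sum>x\<in>S. g x y) * v pp y)"
    unfolding UU_eq using g(3) by simp
  also have "\<dots> = (\<Sum>x\<in>S. \<Sum>y\<in>S. g x y * v pp y)"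
    unfolding sum_distrib_right by (rule sum.swap)
  also have "\<dots> \<ge> (\<Sum>x\<in>S. \<Sum>y\<in>S. g x y * (xi x - lam * c x y))"
    using g(1) feas by (intro sum_mono mult_left_mono) auto
  finally have "(\<Sum>x\<in>S. \<Sum>y\<in>S. g x y * (xi x - lam * c x y)) \<le> UU pp q" .
  moreover have "(\<Sum>x\<in>S. \<Sum>y\<in>S. g x y * (xi x - lam * c x y))
      = (\<Sum>x\<in>S. xi x * (\<Sum>y\<in>S. g x y)) - lam * (\<Sum>x\<in>S. \<Sum>y\<in>S. c x y * g x y)"
    by (simp add: algebra_simps sum_subtractf sum_distrib_left)
  moreover have "(\<Sum>x\<in>S. xi x * (\<Sum>y\<in>S. g x y)) = (\<Sum>x\<in>S. sg x * xi x)"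
    using g(2) by (simp add: mult.commute)
  moreover have "lam * (\<Sum>x\<in>S. \<Sum>y\<in>S. c x y * g x y) \<le> lam * (E + \<delta>)"
    using g(4) lam by (rule mult_left_mono)
  ultimately show "(\<Sum>b\<in>S. sg b * xi b) - lam * E \<le> UU pp q + e"
    using le by (simp add: algebra_simps)
qed

lemma weak_RV:
  assumes lam: "lam \<ge> 0"
    and feas: "\<forall>b\<in>S. \<forall>b'\<in>S. xi b - lam * c b b' \<le> v pp b'"
  shows "(\<Sum>b\<in>S. sg b * xi b) - lam * E \<le> RV pp"
  unfolding RV_def
  by (rule cInf_greatest) (use Amb_ne weak[OF _ lam feas] in auto)

lemma member_RV:
  assumes g: "\<forall>x\<in>S. \<forall>y\<in>S. g x y \<ge> 0" "\<forall>x\<in>S. (\<Sum>y\<in>S. g x y) = sg x"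
      "(\<Sum>x\<in>S. \<Sum>y\<in>S. c x y * g x y) \<le> E"
  shows "RV pp \<le> (\<Sum>x\<in>S. \<Sum>y\<in>S. g x y * v pp y)"
proof -
  have m: "(\<lambda>y. \<Sum>x\<in>S. g x y) \<in> Amb" using amb_intro[OF g] .
  have "RV pp \<le> UU pp (\<lambda>y. \<Sum>x\<in>S. g x y)"
    unfolding RV_def by (rule cInf_lower) (use m bdd in auto)
  also have "\<dots> = (\<Sum>x\<in>S. \<Sum>y\<in>S. g x y * v pp y)"
    unfolding UU_eq sum_distrib_right by (rule sum.swap)
  finally show ?thesis .
qed

lemma strong1:
  "\<exists>xi lam. lam \<ge> 0 \<and> (\<forall>b\<in>S. \<forall>b'\<in>S. xi b - lam * c b b' \<le> v pp b')
      \<and> RV pp \<le> (\<Sum>b\<in>S. sg b * xi b) - lam * E"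
proof (rule ccontr)
  assume H: "\<not> ?thesis"
  define K where "K = insert None (insert (Some None) (Some ` Some ` (S \<times> S)))"
  define J where "J = insert None (Some ` S)"
  define L where "L k x = (case k of None \<Rightarrow> E * x None - (\<Sum>b\<in>S. sg b * x (Some b))
      | Some None \<Rightarrow> - x None | Some (Some (b, b')) \<Rightarrow> x (Some b) - c b b' * x None)"
    for k and x :: "'b option \<Rightarrow> real"
  define \<beta> where "\<beta> k = (case k of None \<Rightarrow> - RV pp | Some None \<Rightarrow> 0 | Some (Some (b, b')) \<Rightarrow> v pp b')"
    for k :: "('b \<times> 'b) option option"
  define a where "a k j = (case k of None \<Rightarrow> (case j of None \<Rightarrow> E | Some b \<Rightarrow> - sg b)
      | Some None \<Rightarrow> (case j of None \<Rightarrow> -1 | Some b \<Rightarrow> 0)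
      | Some (Some (b, b')) \<Rightarrow> (case j of None \<Rightarrow> - c b b' | Some b2 \<Rightarrow> if b2 = b then 1 else 0))"
    for k :: "('b \<times> 'b) option option" and j :: "'b option"
  have finK: "finite K" using finS by (simp add: K_def)
  have finJ: "finite J" using finS by (simp add: J_def)
  have rep: "\<forall>k\<in>K. \<forall>x. L k x = (\<Sum>j\<in>J. a k j * x j)"
  proof (intro ballI allI)
    fix k x assume "k \<in> K"
    then consider "k = None" | "k = Some None" | b b' where "b \<in> S" "b' \<in> S" "k = Some (Some (b, b'))"
      by (auto simp: K_def)
    then show "L k x = (\<Sum>j\<in>J. a k j * x j)"
    proof cases
      case 1 then show ?thesis
        by (simp add: J_def sum_option_split[OF finS] L_def a_def sum_negf)
    next
      case 2 then show ?thesis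
        by (simp add: J_def sum_option_split[OF finS] L_def a_def)
    next
      case 3
      have "(\<Sum>b2\<in>S. (if b2 = b then 1 else 0) * x (Some b2)) = x (Some b)"
        using sum_if_eq_mult[OF finS 3(1), of "\<lambda>b2. x (Some b2)"] by (simp add: mult.commute)
      with 3 show ?thesis
        by (simp add: J_def sum_option_split[OF finS] L_def a_def)
    qed
  qed
  have nf: "\<not> (\<exists>x. \<forall>k\<in>K. L k x \<le> \<beta> k)"
  proof
    assume "\<exists>x. \<forall>k\<in>K. L k x \<le> \<beta> k"
    then obtain x where x: "\<forall>k\<in>K. L k x \<le> \<beta> k" by blast
    have "x None \<ge> 0" using x[rule_format, of "Some None"] by (simp add: K_def L_def \<beta>_def)
    moreover have "\<forall>b\<in>S. \<forall>b'\<in>S. x (Some b) - x None * c b b' \<le> v pp b'"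
      using x by (auto simp: K_def L_def \<beta>_def mult.commute)
    moreover have "RV pp \<le> (\<Sum>b\<in>S. sg b * x (Some b)) - x None * E"
      using x[rule_format, of None] by (simp add: K_def L_def \<beta>_def mult.commute)
    ultimately have "\<exists>xi lam. lam \<ge> 0 \<and> (\<forall>b\<in>S. \<forall>b'\<in>S. xi b - lam * c b b' \<le> v pp b')
      \<and> RV pp \<le> (\<Sum>b\<in>S. sg b * xi b) - lam * E"
      by (intro exI[of _ "\<lambda>b. x (Some b)"] exI[of _ "x None"]) simp
    then show False using H by blast
  qed
  from farkas_lin[OF finK finJ rep nf] obtain y where
    y: "\<forall>k\<in>K. y k \<ge> 0" "\<forall>x. (\<Sum>k\<in>K. y k * L k x) = 0" "(\<Sum>k\<in>K. y k * \<beta> k) < 0" by blast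
  define r where "r = y None"
  define t where "t = y (Some None)"
  define \<eta> where "\<eta> b b' = y (Some (Some (b, b')))" for b b'
  have sK: "(\<Sum>k\<in>K. f k) = f None + f (Some None) + (\<Sum>b\<in>S. \<Sum>b'\<in>S. f (Some (Some (b, b'))))" for f
    unfolding K_def by (rule sum_K_split[OF finS])
  have r: "r \<ge> 0" and t: "t \<ge> 0" using y(1) by (auto simp: r_def t_def K_def)
  have eta: "\<forall>b\<in>S. \<forall>b'\<in>S. \<eta> b b' \<ge> 0" using y(1) by (auto simp: \<eta>_def K_def)
  have row: "(\<Sum>b'\<in>S. \<eta> b0 b') = r * sg b0" if b0: "b0 \<in> S" for b0
  proof -
    define x where "x j = (if j = Some b0 then 1 else 0 :: real)" for j
    have "(\<Sum>k\<in>K. y k * L k x) = 0" using y(2) by blast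
    then have "r * (- (\<Sum>b\<in>S. sg b * (if b = b0 then 1 else 0))) +
        (\<Sum>b\<in>S. \<Sum>b'\<in>S. \<eta> b b' * (if b = b0 then 1 else 0)) = 0"
      unfolding sK by (simp add: L_def x_def r_def \<eta>_def t_def)
    moreover have "(\<Sum>b\<in>S. \<Sum>b'\<in>S. \<eta> b b' * (if b = b0 then 1 else 0)) = (\<Sum>b'\<in>S. \<eta> b0 b')"
      using sum_if_eq_mult[OF finS b0, of "\<lambda>b. \<Sum>b'\<in>S. \<eta> b b'"]
      by (simp add: sum_distrib_right)
    ultimately show ?thesis using sum_if_eq_mult[OF finS b0, of sg] by simp
  qed
  have cost: "(\<Sum>b\<in>S. \<Sum>b'\<in>S. c b b' * \<eta> b b') = r * E - t"
  proof -
    define x where "x j = (if j = None then 1 else 0 :: real)" for j :: "'b option"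
    have "(\<Sum>k\<in>K. y k * L k x) = 0" using y(2) by blast
    then have "r * E - t - (\<Sum>b\<in>S. \<Sum>b'\<in>S. \<eta> b b' * c b b') = 0"
      unfolding sK by (simp add: L_def x_def r_def \<eta>_def t_def sum_negf)
    then show ?thesis by (simp add: mult.commute)
  qed
  have obj: "(\<Sum>b\<in>S. \<Sum>b'\<in>S. \<eta> b b' * v pp b') < r * RV pp"
    using y(3) unfolding sK by (simp add: \<beta>_def r_def \<eta>_def t_def)
  show False
  proof (cases "r = 0")
    case True
    have "\<forall>b\<in>S. \<forall>b'\<in>S. \<eta> b b' = 0"
    proof (intro ballI)
      fix b b' assume b: "b \<in> S" and b': "b' \<in> S"
      have "(\<Sum>b'\<in>S. \<eta> b b') = 0" using row[OF b] True by simp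
      then show "\<eta> b b' = 0" using sum_nonneg_eq_0_iff[OF finS] eta b b' by auto
    qed
    then have "(\<Sum>b\<in>S. \<Sum>b'\<in>S. \<eta> b b' * v pp b') = 0" by simp
    then show False using obj True by simp
  next
    case False
    then have rp: "r > 0" using r by simp
    define g where "g b b' = \<eta> b b' / r" for b b'
    have "RV pp \<le> (\<Sum>x\<in>S. \<Sum>y\<in>S. g x y * v pp y)"
    proof (rule member_RV)
      show "\<forall>x\<in>S. \<forall>y\<in>S. g x y \<ge> 0" using eta rp by (simp add: g_def)
      show "\<forall>x\<in>S. (\<Sum>y\<in>S. g x y) = sg x" using row rp by (simp add: g_def sum_divide_distrib[symmetric])
      have "(\<Sum>x\<in>S. \<Sum>y\<in>S. c x y * g x y) = (\<Sum>b\<in>S. \<Sum>b'\<in>S. c b b' * \<eta> b b') / r"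
        by (simp add: g_def sum_divide_distrib)
      also have "\<dots> = E - t / r" using cost rp by (simp add: field_simps)
      also have "\<dots> \<le> E" using t rp by simp
      finally show "(\<Sum>x\<in>S. \<Sum>y\<in>S. c x y * g x y) \<le> E" .
    qed
    also have "(\<Sum>x\<in>S. \<Sum>y\<in>S. g x y * v pp y) = (\<Sum>b\<in>S. \<Sum>b'\<in>S. \<eta> b b' * v pp b') / r"
      by (simp add: g_def sum_divide_distrib)
    also have "\<dots> < RV pp" using obj rp by (simp add: divide_less_eq mult.commute)
    finally show False by simp
  qed
qed

lemma strong2:
  assumes opt: "\<forall>pp. is_mixed Ai pp \<longrightarrow> RV pp \<le> RV pb"
  shows "\<exists>eta tau om ka. (\<forall>b\<in>S. \<forall>b'\<in>S. eta b b' \<ge> 0) \<and> tau \<ge> 0 \<and> (\<forall>a\<in>Ai. om a \<ge> 0) \<and>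
     (\<forall>a\<in>Ai. om a + ka + (\<Sum>b\<in>S. \<Sum>b'\<in>S. eta b b' * uu a b') = 0) \<and>
     - E + tau + (\<Sum>b\<in>S. \<Sum>b'\<in>S. eta b b' * c b b') = 0 \<and>
     (\<forall>b\<in>S. sg b - (\<Sum>b'\<in>S. eta b b') = 0) \<and> - ka \<le> RV pb"
proof -
  define ga where "ga i j = (case i of
      GE b b' \<Rightarrow> (case j of CA x \<Rightarrow> uu x b' | CC \<Rightarrow> c b b' | CB b2 \<Rightarrow> if b = b2 then 1 else 0 | CO \<Rightarrow> 0)
    | GTau \<Rightarrow> (case j of CC \<Rightarrow> 1 | _ \<Rightarrow> 0)
    | GW x \<Rightarrow> (case j of CA x2 \<Rightarrow> if x = x2 then 1 else 0 | _ \<Rightarrow> 0)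
    | GKp \<Rightarrow> (case j of CA _ \<Rightarrow> 1 | CO \<Rightarrow> -1 | _ \<Rightarrow> 0)
    | GKm \<Rightarrow> (case j of CA _ \<Rightarrow> -1 | CO \<Rightarrow> 1 | _ \<Rightarrow> 0)
    | GR \<Rightarrow> (case j of CO \<Rightarrow> 1 | _ \<Rightarrow> (0::real)))" for i j
  define bv where "bv j = (case j of CA _ \<Rightarrow> 0 | CC \<Rightarrow> E | CB b \<Rightarrow> sg b | CO \<Rightarrow> RV pb)"
    for j :: "('b, 'c) crd"
  have finI: "finite (Iset S Ai)" using finS finA by (simp add: Iset_def)
  have finJ: "finite (Jset S Ai)" using finS finA by (simp add: Jset_def)
  from farkas_cone[OF finI finJ, where a=ga and bv=bv] show ?thesis
  proof
    assume "\<exists>\<mu>. (\<forall>i\<in>Iset S Ai. \<mu> i \<ge> 0) \<and> (\<forall>j\<in>Jset S Ai. bv j = (\<Sum>i\<in>Iset S Ai. \<mu> i * ga i j))"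
    then obtain \<mu> where \<mu>: "\<forall>i\<in>Iset S Ai. \<mu> i \<ge> 0" "\<forall>j\<in>Jset S Ai. bv j = (\<Sum>i\<in>Iset S Ai. \<mu> i * ga i j)"
      by blast
    define eta where "eta b b' = \<mu> (GE b b')" for b b'
    define om where "om x = \<mu> (GW x)" for x
    define ka where "ka = \<mu> GKp - \<mu> GKm"
    have sI: "(\<Sum>i\<in>Iset S Ai. \<mu> i * ga i j) = (\<Sum>b\<in>S. \<Sum>b'\<in>S. \<mu> (GE b b') * ga (GE b b') j) + \<mu> GTau * ga GTau j
       + (\<Sum>x\<in>Ai. \<mu> (GW x) * ga (GW x) j) + \<mu> GKp * ga GKp j + \<mu> GKm * ga GKm j + \<mu> GR * ga GR j" for j
      by (rule sum_I_split[OF finS finA])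
    have c1: "\<forall>b\<in>S. \<forall>b'\<in>S. eta b b' \<ge> 0" using \<mu>(1) by (auto simp: eta_def Iset_def)
    have c2: "\<mu> GTau \<ge> 0" "\<mu> GR \<ge> 0" using \<mu>(1) by (auto simp: Iset_def)
    have c3: "\<forall>a\<in>Ai. om a \<ge> 0" using \<mu>(1) by (auto simp: om_def Iset_def)
    have c4: "\<forall>a\<in>Ai. om a + ka + (\<Sum>b\<in>S. \<Sum>b'\<in>S. eta b b' * uu a b') = 0"
    proof
      fix a assume a: "a \<in> Ai"
      have "bv (CA a) = (\<Sum>i\<in>Iset S Ai. \<mu> i * ga i (CA a))" using \<mu>(2) a by (auto simp: Jset_def)
      then have "0 = (\<Sum>b\<in>S. \<Sum>b'\<in>S. \<mu> (GE b b') * uu a b') + (\<Sum>x\<in>Ai. \<mu> (GW x) * (if x = a then 1 else 0))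
          + \<mu> GKp - \<mu> GKm"
        unfolding sI by (simp add: ga_def bv_def)
      then show "om a + ka + (\<Sum>b\<in>S. \<Sum>b'\<in>S. eta b b' * uu a b') = 0"
        using sum_if_eq_mult[OF finA a, of "\<lambda>x. \<mu> (GW x)"] by (simp add: om_def ka_def eta_def)
    qed
    have c5: "- E + \<mu> GTau + (\<Sum>b\<in>S. \<Sum>b'\<in>S. eta b b' * c b b') = 0"
    proof -
      have "bv CC = (\<Sum>i\<in>Iset S Ai. \<mu> i * ga i CC)" using \<mu>(2) by (auto simp: Jset_def)
      then show ?thesis unfolding sI by (simp add: ga_def bv_def eta_def)
    qed
    have c6: "\<forall>b\<in>S. sg b - (\<Sum>b'\<in>S. eta b b') = 0"
    proof
      fix b0 assume b0: "b0 \<in> S"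
      have "bv (CB b0) = (\<Sum>i\<in>Iset S Ai. \<mu> i * ga i (CB b0))" using \<mu>(2) b0 by (auto simp: Jset_def)
      then have "sg b0 = (\<Sum>b\<in>S. \<Sum>b'\<in>S. \<mu> (GE b b') * (if b = b0 then 1 else 0))"
        unfolding sI by (simp add: ga_def bv_def)
      also have "\<dots> = (\<Sum>b\<in>S. (\<Sum>b'\<in>S. \<mu> (GE b b')) * (if b = b0 then 1 else 0))"
        by (simp add: sum_distrib_right)
      also have "\<dots> = (\<Sum>b'\<in>S. eta b0 b')"
        using sum_if_eq_mult[OF finS b0, of "\<lambda>b. \<Sum>b'\<in>S. \<mu> (GE b b')"] by (simp add: eta_def)
      finally show "sg b0 - (\<Sum>b'\<in>S. eta b0 b') = 0" by simp
    qed
    have c7: "- ka \<le> RV pb"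
    proof -
      have "bv CO = (\<Sum>i\<in>Iset S Ai. \<mu> i * ga i CO)" using \<mu>(2) by (auto simp: Jset_def)
      then have "RV pb = - \<mu> GKp + \<mu> GKm + \<mu> GR" unfolding sI by (simp add: ga_def bv_def)
      then show ?thesis using c2 by (simp add: ka_def)
    qed
    show ?thesis using c1 c2 c3 c4 c5 c6 c7 by blast
  next
    assume "\<exists>y. (\<forall>i\<in>Iset S Ai. (\<Sum>j\<in>Jset S Ai. y j * ga i j) \<ge> 0) \<and> (\<Sum>j\<in>Jset S Ai. y j * bv j) < 0"
    then obtain y where y: "\<forall>i\<in>Iset S Ai. (\<Sum>j\<in>Jset S Ai. y j * ga i j) \<ge> 0"
        "(\<Sum>j\<in>Jset S Ai. y j * bv j) < 0" by blast
    have sJ: "(\<Sum>j\<in>Jset S Ai. y j * ga i j) = (\<Sum>x\<in>Ai. y (CA x) * ga i (CA x)) + y CC * ga i CC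
        + (\<Sum>b\<in>S. y (CB b) * ga i (CB b)) + y CO * ga i CO" for i
      by (rule sum_J_split[OF finS finA])
    define \<pi> where "\<pi> x = y (CA x)" for x
    define yc where "yc = y CC"
    define yb where "yb b = y (CB b)" for b
    define yo where "yo = y CO"
    have gE: "(\<Sum>x\<in>Ai. \<pi> x * uu x b') + yc * c b b' + yb b \<ge> 0" if "b \<in> S" "b' \<in> S" for b b'
    proof -
      have "(\<Sum>j\<in>Jset S Ai. y j * ga (GE b b') j) \<ge> 0" using y(1) that by (auto simp: Iset_def)
      then show ?thesis unfolding sJ
        using sum_if_eq_mult2[OF finS that(1), of "\<lambda>b2. y (CB b2)"]
        by (simp add: ga_def \<pi>_def yc_def yb_def)
    qed
    have gT: "yc \<ge> 0"
    proof -
      have "(\<Sum>j\<in>Jset S Ai. y j * ga GTau j) \<ge> 0" using y(1) by (auto simp: Iset_def)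
      then show ?thesis unfolding sJ by (simp add: ga_def yc_def)
    qed
    have gW: "\<pi> x \<ge> 0" if x: "x \<in> Ai" for x
    proof -
      have "(\<Sum>j\<in>Jset S Ai. y j * ga (GW x) j) \<ge> 0" using y(1) x by (auto simp: Iset_def)
      then show ?thesis unfolding sJ
        using sum_if_eq_mult2[OF finA x, of "\<lambda>b2. y (CA b2)"]
        by (simp add: ga_def \<pi>_def)
    qed
    have gK: "(\<Sum>x\<in>Ai. \<pi> x) = yo"
    proof -
      have "(\<Sum>j\<in>Jset S Ai. y j * ga GKp j) \<ge> 0" "(\<Sum>j\<in>Jset S Ai. y j * ga GKm j) \<ge> 0"
        using y(1) by (auto simp: Iset_def)
      then show ?thesis unfolding sJ by (simp add: ga_def \<pi>_def yo_def sum_negf)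
    qed
    have gR: "yo \<ge> 0"
    proof -
      have "(\<Sum>j\<in>Jset S Ai. y j * ga GR j) \<ge> 0" using y(1) by (auto simp: Iset_def)
      then show ?thesis unfolding sJ by (simp add: ga_def yo_def)
    qed
    have tgt: "yc * E + (\<Sum>b\<in>S. yb b * sg b) + yo * RV pb < 0"
      using y(2) unfolding sum_J_split[OF finS finA] by (simp add: bv_def yc_def yb_def yo_def)
    show ?thesis
    proof (cases "yo = 0")
      case True
      have \<pi>0: "\<forall>x\<in>Ai. \<pi> x = 0"
        using gK True sum_nonneg_eq_0_iff[OF finA] gW by auto
      have "yb b \<ge> 0" if b: "b \<in> S" for b
        using gE[OF b b] \<pi>0 c_diag b by simp
      then have "(\<Sum>b\<in>S. yb b * sg b) \<ge> 0" using sg_nn by (auto intro!: sum_nonneg)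
      moreover have "yc * E \<ge> 0" using gT E_nn by simp
      ultimately show ?thesis using tgt True by simp
    next
      case False
      then have yo: "yo > 0" using gR by simp
      define pp where "pp x = \<pi> x / yo" for x
      define lam where "lam = yc / yo"
      define xi where "xi b = - yb b / yo" for b
      have mixed: "is_mixed Ai pp"
        unfolding is_mixed_def pp_def using gW yo gK by (simp add: sum_divide_distrib[symmetric])
      have lam: "lam \<ge> 0" using gT yo by (simp add: lam_def)
      have feas: "\<forall>b\<in>S. \<forall>b'\<in>S. xi b - lam * c b b' \<le> v pp b'"
      proof (intro ballI)
        fix b b' assume "b \<in> S" "b' \<in> S"
        from gE[OF this] have "- yb b - yc * c b b' \<le> (\<Sum>x\<in>Ai. \<pi> x * uu x b')" by simp
        then have "(- yb b - yc * c b b') / yo \<le> (\<Sum>x\<in>Ai. \<pi> x * uu x b') / yo"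
          using yo by (intro divide_right_mono) auto
        then show "xi b - lam * c b b' \<le> v pp b'"
          by (simp add: xi_def lam_def v_def pp_def sum_divide_distrib diff_divide_distrib mult.commute)
      qed
      have "(\<Sum>b\<in>S. sg b * xi b) - lam * E \<le> RV pp" by (rule weak_RV[OF lam feas])
      also have "\<dots> \<le> RV pb" using opt mixed by blast
      finally have le: "(\<Sum>b\<in>S. sg b * xi b) - lam * E \<le> RV pb" .
      have "(\<Sum>b\<in>S. sg b * xi b) - lam * E = - (yc * E + (\<Sum>b\<in>S. yb b * sg b)) / yo"
        using yo by (simp add: xi_def lam_def sum_divide_distrib[symmetric] sum_negf field_simps)
      then have "- (yc * E + (\<Sum>b\<in>S. yb b * sg b)) \<le> RV pb * yo"
        using le yo by (simp add: divide_le_eq)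
      then show ?thesis using tgt by (simp add: algebra_simps)
    qed
  qed
qed

lemma eta_v:
  "(\<Sum>b\<in>S. \<Sum>b'\<in>S. eta b b' * v pp b') = (\<Sum>a\<in>Ai. pp a * (\<Sum>b\<in>S. \<Sum>b'\<in>S. eta b b' * uu a b'))"
proof -
  have "(\<Sum>b\<in>S. \<Sum>b'\<in>S. eta b b' * v pp b') = (\<Sum>b\<in>S. \<Sum>b'\<in>S. \<Sum>a\<in>Ai. pp a * (eta b b' * uu a b'))"
    by (simp add: v_def sum_distrib_left mult_ac)
  also have "\<dots> = (\<Sum>b\<in>S. \<Sum>a\<in>Ai. \<Sum>b'\<in>S. pp a * (eta b b' * uu a b'))"
    by (intro sum.cong refl) (rule sum.swap)
  also have "\<dots> = (\<Sum>a\<in>Ai. \<Sum>b\<in>S. \<Sum>b'\<in>S. pp a * (eta b b' * uu a b'))"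
    by (rule sum.swap)
  also have "\<dots> = (\<Sum>a\<in>Ai. pp a * (\<Sum>b\<in>S. \<Sum>b'\<in>S. eta b b' * uu a b'))"
    by (simp add: sum_distrib_left)
  finally show ?thesis .
qed

lemma eta_v2:
  assumes e1: "\<forall>a\<in>Ai. om a + ka + (\<Sum>b\<in>S. \<Sum>b'\<in>S. eta b b' * uu a b') = 0"
    and pm: "(\<Sum>a\<in>Ai. pp a) = 1"
  shows "(\<Sum>b\<in>S. \<Sum>b'\<in>S. eta b b' * v pp b') = - (\<Sum>a\<in>Ai. pp a * om a) - ka"
proof -
  have "(\<Sum>b\<in>S. \<Sum>b'\<in>S. eta b b' * v pp b') = (\<Sum>a\<in>Ai. pp a * (- om a - ka))"
  proof -
    have h: "(\<Sum>b\<in>S. \<Sum>b'\<in>S. eta b b' * uu a b') = - om a - ka" if "a \<in> Ai" for a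
      using bspec[OF e1 that] by linarith
    show ?thesis unfolding eta_v by (intro sum.cong refl) (simp add: h)
  qed
  also have "\<dots> = - (\<Sum>a\<in>Ai. pp a * om a) - ka * (\<Sum>a\<in>Ai. pp a)"
    by (simp add: algebra_simps sum_subtractf sum_distrib_left sum_negf)
  finally show ?thesis using pm by simp
qed

lemma kkt_identity:
  assumes e1: "\<forall>a\<in>Ai. om a + ka + (\<Sum>b\<in>S. \<Sum>b'\<in>S. eta b b' * uu a b') = 0"
    and e2: "- E + tau + (\<Sum>b\<in>S. \<Sum>b'\<in>S. eta b b' * c b b') = 0"
    and e3: "\<forall>b\<in>S. sg b - (\<Sum>b'\<in>S. eta b b') = 0"
    and pm: "(\<Sum>a\<in>Ai. pb a) = 1"
  shows "(\<Sum>b\<in>S. \<Sum>b'\<in>S. eta b b' * (- xi b + v pb b' + lam * c b b')) + tau * lam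
      + (\<Sum>a\<in>Ai. om a * pb a) = - (\<Sum>b\<in>S. sg b * xi b) - ka + lam * E"
proof -
  have "(\<Sum>b\<in>S. \<Sum>b'\<in>S. eta b b' * (- xi b + v pb b' + lam * c b b'))
      = - (\<Sum>b\<in>S. xi b * (\<Sum>b'\<in>S. eta b b')) + (\<Sum>b\<in>S. \<Sum>b'\<in>S. eta b b' * v pb b')
        + lam * (\<Sum>b\<in>S. \<Sum>b'\<in>S. eta b b' * c b b')"
  proof -
    have inner: "(\<Sum>b'\<in>S. eta b b' * (- xi b + v pb b' + lam * c b b'))
       = - (xi b * (\<Sum>b'\<in>S. eta b b')) + (\<Sum>b'\<in>S. eta b b' * v pb b')
         + lam * (\<Sum>b'\<in>S. eta b b' * c b b')" for b
      by (simp add: distrib_left right_diff_distrib sum_subtractf sum.distrib sum_distrib_left sum_negf mult_ac)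
    show ?thesis unfolding inner by (simp add: sum.distrib sum_subtractf sum_negf sum_distrib_left)
  qed
  also have "(\<Sum>b\<in>S. xi b * (\<Sum>b'\<in>S. eta b b')) = (\<Sum>b\<in>S. sg b * xi b)"
    using e3 by (intro sum.cong refl) simp
  also have "(\<Sum>b\<in>S. \<Sum>b'\<in>S. eta b b' * v pb b') = - (\<Sum>a\<in>Ai. pb a * om a) - ka"
    by (rule eta_v2[OF e1 pm])
  also have "(\<Sum>b\<in>S. \<Sum>b'\<in>S. eta b b' * c b b') = E - tau" using e2 by simp
  finally show ?thesis by (simp add: algebra_simps)
qed

theorem abstract_main:
  assumes pm: "is_mixed Ai pb"
  shows "(\<forall>pp. is_mixed Ai pp \<longrightarrow> RV pp \<le> RV pb) \<longleftrightarrow>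
    (\<exists>(lam::real) (xi::'b \<Rightarrow> real) (tau::real) (om::'c \<Rightarrow> real) (ka::real) (eta::'b \<Rightarrow> 'b \<Rightarrow> real).
       (\<forall>a\<in>Ai. om a + ka + (\<Sum>b\<in>S. \<Sum>b'\<in>S. eta b b' * uu a b') = 0) \<and>
       - E + tau + (\<Sum>b\<in>S. \<Sum>b'\<in>S. eta b b' * c b b') = 0 \<and>
       (\<forall>b\<in>S. sg b - (\<Sum>b'\<in>S. eta b b') = 0) \<and>
       perp tau lam \<and>
       (\<forall>a\<in>Ai. perp (om a) (pb a)) \<and>
       (\<forall>b\<in>S. \<forall>b'\<in>S. perp (eta b b') (- xi b + (\<Sum>a\<in>Ai. uu a b' * pb a) + lam * c b b')))"
    (is "?L \<longleftrightarrow> ?R")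
proof
  assume opt: ?L
  obtain xi lam where d: "lam \<ge> 0" "\<forall>b\<in>S. \<forall>b'\<in>S. xi b - lam * c b b' \<le> v pb b'"
      "RV pb \<le> (\<Sum>b\<in>S. sg b * xi b) - lam * E"
    using strong1[of pb] by blast
  obtain eta tau om ka where p: "\<forall>b\<in>S. \<forall>b'\<in>S. eta b b' \<ge> 0" "tau \<ge> 0" "\<forall>a\<in>Ai. om a \<ge> 0"
     "\<forall>a\<in>Ai. om a + ka + (\<Sum>b\<in>S. \<Sum>b'\<in>S. eta b b' * uu a b') = 0"
     "- E + tau + (\<Sum>b\<in>S. \<Sum>b'\<in>S. eta b b' * c b b') = 0"
     "\<forall>b\<in>S. sg b - (\<Sum>b'\<in>S. eta b b') = 0" "- ka \<le> RV pb"
    using strong2[OF opt] by blast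
  have pbn: "\<forall>a\<in>Ai. pb a \<ge> 0" and pbs: "(\<Sum>a\<in>Ai. pb a) = 1" using pm by (auto simp: is_mixed_def)
  define G where "G b b' = - xi b + v pb b' + lam * c b b'" for b b'
  have G: "\<forall>b\<in>S. \<forall>b'\<in>S. G b b' \<ge> 0" using d(2) by (auto simp: G_def algebra_simps)
  have id: "(\<Sum>b\<in>S. \<Sum>b'\<in>S. eta b b' * G b b') + tau * lam + (\<Sum>a\<in>Ai. om a * pb a)
      = - (\<Sum>b\<in>S. sg b * xi b) - ka + lam * E"
    unfolding G_def by (rule kkt_identity[OF p(4,5,6) pbs])
  have n1: "\<forall>b\<in>S. (\<Sum>b'\<in>S. eta b b' * G b b') \<ge> 0" using p(1) G by (auto intro!: sum_nonneg)
  have n1': "(\<Sum>b\<in>S. \<Sum>b'\<in>S. eta b b' * G b b') \<ge> 0" by (rule sum_nonneg) (use n1 in blast)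
  have n2: "tau * lam \<ge> 0" using p(2) d(1) by simp
  have n3: "\<forall>a\<in>Ai. om a * pb a \<ge> 0" using p(3) pbn by auto
  have n3': "(\<Sum>a\<in>Ai. om a * pb a) \<ge> 0" using n3 by (auto intro!: sum_nonneg)
  have le0: "- (\<Sum>b\<in>S. sg b * xi b) - ka + lam * E \<le> 0" using d(3) p(7) by simp
  have z1: "(\<Sum>b\<in>S. \<Sum>b'\<in>S. eta b b' * G b b') = 0" and z2: "tau * lam = 0"
    and z3: "(\<Sum>a\<in>Ai. om a * pb a) = 0"
    using id le0 n1' n2 n3' by linarith+
  have z1': "\<forall>b\<in>S. \<forall>b'\<in>S. eta b b' * G b b' = 0"
  proof (intro ballI)
    fix b b' assume b: "b \<in> S" and b': "b' \<in> S"
    have "(\<Sum>b'\<in>S. eta b b' * G b b') = 0" using z1 sum_nonneg_eq_0_iff[OF finS, of "\<lambda>b. \<Sum>b'\<in>S. eta b b' * G b b'"] n1 b by auto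
    moreover have "\<forall>b'\<in>S. eta b b' * G b b' \<ge> 0" using p(1) G b by simp
    ultimately show "eta b b' * G b b' = 0"
      using sum_nonneg_eq_0_iff[OF finS, of "\<lambda>b'. eta b b' * G b b'"] b' by auto
  qed
  have z3': "\<forall>a\<in>Ai. om a * pb a = 0"
    using z3 sum_nonneg_eq_0_iff[OF finA, of "\<lambda>a. om a * pb a"] n3 by blast
  have "perp tau lam" using p(2) d(1) z2 by (simp add: perp_def)
  moreover have "\<forall>a\<in>Ai. perp (om a) (pb a)" using p(3) pbn z3' by (simp add: perp_def)
  moreover have "\<forall>b\<in>S. \<forall>b'\<in>S. perp (eta b b') (- xi b + (\<Sum>a\<in>Ai. uu a b' * pb a) + lam * c b b')"
    using p(1) G z1' by (simp add: perp_def G_def v_def)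
  ultimately show ?R using p(4,5,6) by blast
next
  assume ?R
  then obtain lam xi tau om ka eta where
     e1: "\<forall>a\<in>Ai. om a + ka + (\<Sum>b\<in>S. \<Sum>b'\<in>S. eta b b' * uu a b') = 0" and
     e2: "- E + tau + (\<Sum>b\<in>S. \<Sum>b'\<in>S. eta b b' * c b b') = 0" and
     e3: "\<forall>b\<in>S. sg b - (\<Sum>b'\<in>S. eta b b') = 0" and
     c1: "perp tau lam" and c2: "\<forall>a\<in>Ai. perp (om a) (pb a)" and
     c3: "\<forall>b\<in>S. \<forall>b'\<in>S. perp (eta b b') (- xi b + (\<Sum>a\<in>Ai. uu a b' * pb a) + lam * c b b')"
    by blast
  have pbs: "(\<Sum>a\<in>Ai. pb a) = 1" using pm by (auto simp: is_mixed_def)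
  have lam: "lam \<ge> 0" and tau: "tau \<ge> 0" and tl: "tau * lam = 0" using c1 by (auto simp: perp_def)
  have eta: "\<forall>b\<in>S. \<forall>b'\<in>S. eta b b' \<ge> 0" using c3 by (auto simp: perp_def)
  have feas: "\<forall>b\<in>S. \<forall>b'\<in>S. xi b - lam * c b b' \<le> v pb b'"
  proof (intro ballI)
    fix b b' assume "b \<in> S" "b' \<in> S"
    then have "0 \<le> - xi b + (\<Sum>a\<in>Ai. uu a b' * pb a) + lam * c b b'" using c3 by (simp add: perp_def)
    then show "xi b - lam * c b b' \<le> v pb b'" by (simp add: v_def)
  qed
  have id: "(\<Sum>b\<in>S. \<Sum>b'\<in>S. eta b b' * (- xi b + v pb b' + lam * c b b')) + tau * lam
      + (\<Sum>a\<in>Ai. om a * pb a) = - (\<Sum>b\<in>S. sg b * xi b) - ka + lam * E"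
    by (rule kkt_identity[OF e1 e2 e3 pbs])
  have "(\<Sum>b\<in>S. \<Sum>b'\<in>S. eta b b' * (- xi b + v pb b' + lam * c b b')) = 0"
    using c3 by (intro sum.neutral ballI) (auto simp: perp_def v_def)
  moreover have "(\<Sum>a\<in>Ai. om a * pb a) = 0"
    using c2 by (intro sum.neutral ballI) (auto simp: perp_def)
  ultimately have dual: "(\<Sum>b\<in>S. sg b * xi b) - lam * E = - ka" using id tl by simp
  have lo: "- ka \<le> RV pb" using weak_RV[OF lam feas] dual by simp
  show ?L
  proof (intro allI impI)
    fix pp assume ppm: "is_mixed Ai pp"
    have ppn: "\<forall>a\<in>Ai. pp a \<ge> 0" and pps: "(\<Sum>a\<in>Ai. pp a) = 1" using ppm by (auto simp: is_mixed_def)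
    have "RV pp \<le> (\<Sum>x\<in>S. \<Sum>y\<in>S. eta x y * v pp y)"
    proof (rule member_RV)
      show "\<forall>x\<in>S. \<forall>y\<in>S. eta x y \<ge> 0" by (rule eta)
      show "\<forall>x\<in>S. (\<Sum>y\<in>S. eta x y) = sg x" using e3 by simp
      have "(\<Sum>x\<in>S. \<Sum>y\<in>S. c x y * eta x y) = E - tau" using e2 by (simp add: mult.commute)
      then show "(\<Sum>x\<in>S. \<Sum>y\<in>S. c x y * eta x y) \<le> E" using tau by simp
    qed
    also have "\<dots> = - (\<Sum>a\<in>Ai. pp a * om a) - ka" by (rule eta_v2[OF e1 pps])
    also have "\<dots> \<le> - ka"
    proof -
      have "(\<Sum>a\<in>Ai. pp a * om a) \<ge> 0" using ppn c2 by (auto intro!: sum_nonneg simp: perp_def)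
      then show ?thesis by simp
    qed
    also have "\<dots> \<le> RV pb" by (rule lo)
    finally show "RV pp \<le> RV pb" .
  qed
qed

end


lemma couplings_ne:
  assumes "finite S" "(\<Sum>x\<in>S. mu x) = 1" "(\<Sum>x\<in>S. nu x) = 1"
    "\<forall>x\<in>S. mu x \<ge> 0" "\<forall>x\<in>S. nu x \<ge> 0"
  shows "(\<lambda>(x, y). mu x * nu y) \<in> couplings S mu nu"
  using assms by (simp add: couplings_def sum_distrib_left[symmetric] sum_distrib_right[symmetric])

lemma wass_cost_nonneg:
  assumes "\<forall>x\<in>S. \<forall>y\<in>S. d x y \<ge> 0" "g \<in> couplings S mu nu"
  shows "(\<Sum>x\<in>S. \<Sum>y\<in>S. d x y powr s * g (x, y)) \<ge> 0"
  using assms by (auto simp: couplings_def intro!: sum_nonneg)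

lemma wass_approx:
  assumes finS: "finite S" and mu: "(\<Sum>x\<in>S. mu x) = 1" "\<forall>x\<in>S. mu x \<ge> 0"
    and nu: "(\<Sum>x\<in>S. nu x) = 1" "\<forall>x\<in>S. nu x \<ge> 0"
    and s: "s \<ge> 1" and eps: "eps \<ge> 0"
    and W: "wasserstein S d s mu nu \<le> eps" and \<delta>: "\<delta> > 0"
  shows "\<exists>g. (\<forall>x\<in>S. \<forall>y\<in>S. g x y \<ge> 0) \<and> (\<forall>x\<in>S. (\<Sum>y\<in>S. g x y) = mu x)
        \<and> (\<forall>y\<in>S. (\<Sum>x\<in>S. g x y) = nu y)
        \<and> (\<Sum>x\<in>S. \<Sum>y\<in>S. d x y powr s * g x y) \<le> eps powr s + \<delta>"
proof -
  define C where "C = (\<lambda>g. \<Sum>x\<in>S. \<Sum>y\<in>S. d x y powr s * g (x, y)) ` couplings S mu nu"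
  have Cne: "C \<noteq> {}" using couplings_ne[OF finS mu(1) nu(1) mu(2) nu(2)] by (auto simp: C_def)
  have C0: "Inf C \<ge> 0"
    by (rule cInf_greatest[OF Cne]) (auto simp: C_def couplings_def intro!: sum_nonneg)
  have "Inf C = (Inf C powr (1 / s)) powr s"
    using s C0 by (simp add: powr_powr powr_one)
  also have "\<dots> \<le> eps powr s"
    using W s unfolding wasserstein_def C_def[symmetric] by (intro powr_mono2) auto
  finally have "Inf C < eps powr s + \<delta>" using \<delta> by simp
  from cInf_lessD[OF Cne this] obtain g where g: "g \<in> couplings S mu nu"
    "(\<Sum>x\<in>S. \<Sum>y\<in>S. d x y powr s * g (x, y)) < eps powr s + \<delta>"
    by (auto simp: C_def)
  show ?thesis
    by (rule exI[of _ "\<lambda>x y. g (x, y)"]) (use g in \<open>auto simp: couplings_def\<close>)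
qed

lemma wass_intro:
  assumes finS: "finite S" and d: "\<forall>x\<in>S. \<forall>y\<in>S. d x y \<ge> 0"
    and s: "s \<ge> 1" and eps: "eps \<ge> 0"
    and g: "\<forall>x\<in>S. \<forall>y\<in>S. g x y \<ge> 0" "\<forall>x\<in>S. (\<Sum>y\<in>S. g x y) = mu x"
    and cost: "(\<Sum>x\<in>S. \<Sum>y\<in>S. d x y powr s * g x y) \<le> eps powr s"
  shows "wasserstein S d s mu (\<lambda>y. \<Sum>x\<in>S. g x y) \<le> eps"
proof -
  define C where "C = (\<lambda>g. \<Sum>x\<in>S. \<Sum>y\<in>S. d x y powr s * g (x, y)) ` couplings S mu (\<lambda>y. \<Sum>x\<in>S. g x y)"
  have gc: "(\<lambda>(x, y). g x y) \<in> couplings S mu (\<lambda>y. \<Sum>x\<in>S. g x y)"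
    using g by (simp add: couplings_def)
  have Cne: "C \<noteq> {}" using gc by (auto simp: C_def)
  have C0: "Inf C \<ge> 0"
    by (rule cInf_greatest[OF Cne]) (auto simp: C_def couplings_def intro!: sum_nonneg)
  have mem: "(\<Sum>x\<in>S. \<Sum>y\<in>S. d x y powr s * g x y) \<in> C"
    unfolding C_def by (rule rev_image_eqI[OF gc]) simp
  have bdd: "bdd_below C"
  proof (rule bdd_belowI)
    fix z assume "z \<in> C"
    then show "0 \<le> z" by (auto simp: C_def couplings_def intro!: sum_nonneg)
  qed
  have "Inf C \<le> (\<Sum>x\<in>S. \<Sum>y\<in>S. d x y powr s * g x y)"
    by (rule cInf_lower[OF mem bdd])
  also have "\<dots> \<le> eps powr s" by (rule cost)
  finally have "Inf C powr (1 / s) \<le> (eps powr s) powr (1 / s)"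
    using s C0 by (intro powr_mono2) auto
  also have "\<dots> = eps" using s eps by (simp add: powr_powr powr_one)
  finally show ?thesis unfolding wasserstein_def C_def .
qed

theorem proposition2:
  fixes N :: nat and A :: "nat \<Rightarrow> 'a set"
    and u :: "nat \<Rightarrow> (nat \<Rightarrow> 'a) \<Rightarrow> real"
    and d :: "nat \<Rightarrow> (nat \<Rightarrow> 'a) \<Rightarrow> (nat \<Rightarrow> 'a) \<Rightarrow> real"
    and eps s :: real and p :: "nat \<Rightarrow> 'a \<Rightarrow> real"
  assumes fin: "\<forall>i<N. finite (A i) \<and> A i \<noteq> {}"
    and eps: "eps \<ge> 0" and s: "s \<ge> 1"
    and metric: "\<forall>i<N. metric_on (opp_profiles N A i) (d i)"
    and mixed: "\<forall>i<N. is_mixed (A i) (p i)"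
  shows "strategically_robust_eq N A u d s eps p \<longleftrightarrow>
    (\<forall>i<N. \<exists>(lam::real) (xi::(nat \<Rightarrow> 'a) \<Rightarrow> real) (tau::real) (om::'a \<Rightarrow> real) (ka::real)
              (eta::(nat \<Rightarrow> 'a) \<Rightarrow> (nat \<Rightarrow> 'a) \<Rightarrow> real).
       (\<forall>a\<in>A i. om a + ka + (\<Sum>b\<in>opp_profiles N A i. \<Sum>b'\<in>opp_profiles N A i.
                                  eta b b' * u i (b'(i := a))) = 0) \<and>
       - (eps powr s) + tau + (\<Sum>b\<in>opp_profiles N A i. \<Sum>b'\<in>opp_profiles N A i.
                                  eta b b' * d i b b' powr s) = 0 \<and>
       (\<forall>b\<in>opp_profiles N A i. (\<Prod>j\<in>{..<N} - {i}. p j (b j))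
                                   - (\<Sum>b'\<in>opp_profiles N A i. eta b b') = 0) \<and>
       perp tau lam \<and>
       (\<forall>a\<in>A i. perp (om a) (p i a)) \<and>
       (\<forall>b\<in>opp_profiles N A i. \<forall>b'\<in>opp_profiles N A i.
          perp (eta b b') (- xi b + (\<Sum>a\<in>A i. u i (b'(i := a)) * p i a) + lam * d i b b' powr s)))"
proof -
  have key: "(\<forall>pp. is_mixed (A i) pp \<longrightarrow> robust_value N A u d s eps i p pp \<le> robust_value N A u d s eps i p (p i))
    \<longleftrightarrow> (\<exists>(lam::real) (xi::(nat \<Rightarrow> 'a) \<Rightarrow> real) (tau::real) (om::'a \<Rightarrow> real) (ka::real)
              (eta::(nat \<Rightarrow> 'a) \<Rightarrow> (nat \<Rightarrow> 'a) \<Rightarrow> real).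
       (\<forall>a\<in>A i. om a + ka + (\<Sum>b\<in>opp_profiles N A i. \<Sum>b'\<in>opp_profiles N A i.
                                  eta b b' * u i (b'(i := a))) = 0) \<and>
       - (eps powr s) + tau + (\<Sum>b\<in>opp_profiles N A i. \<Sum>b'\<in>opp_profiles N A i.
                                  eta b b' * d i b b' powr s) = 0 \<and>
       (\<forall>b\<in>opp_profiles N A i. (\<Prod>j\<in>{..<N} - {i}. p j (b j))
                                   - (\<Sum>b'\<in>opp_profiles N A i. eta b b') = 0) \<and>
       perp tau lam \<and>
       (\<forall>a\<in>A i. perp (om a) (p i a)) \<and>
       (\<forall>b\<in>opp_profiles N A i. \<forall>b'\<in>opp_profiles N A i.
          perp (eta b b') (- xi b + (\<Sum>a\<in>A i. u i (b'(i := a)) * p i a) + lam * d i b b' powr s)))"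
    if i: "i < N" for i
  proof -
    define S where "S = opp_profiles N A i"
    define sg where "sg b = (\<Prod>j\<in>{..<N} - {i}. p j (b j))" for b :: "nat \<Rightarrow> 'a"
    have finS: "finite S" unfolding S_def opp_profiles_def using fin by (auto intro!: finite_PiE)
    have memS: "b j \<in> A j" if "b \<in> S" "j \<in> {..<N} - {i}" for b j
      using that by (auto simp: S_def opp_profiles_def PiE_def Pi_def)
    have sg_nn: "\<forall>b\<in>S. sg b \<ge> 0"
      unfolding sg_def using memS mixed by (auto intro!: prod_nonneg simp: is_mixed_def)
    have sg_sum: "(\<Sum>b\<in>S. sg b) = 1"
    proof -
      have "(\<Sum>b\<in>S. sg b) = (\<Prod>j\<in>{..<N} - {i}. \<Sum>a\<in>A j. p j a)"
        unfolding S_def opp_profiles_def sg_def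
        by (rule prod_sum_PiE[symmetric]) (use fin in auto)
      also have "\<dots> = 1" using mixed by (intro prod.neutral) (auto simp: is_mixed_def)
      finally show ?thesis .
    qed
    have sgeq: "sigma_opp N i p = sg" by (rule ext) (simp add: sigma_opp_def sg_def)
    have dnn: "\<forall>x\<in>S. \<forall>y\<in>S. d i x y \<ge> 0" and dd: "\<forall>x\<in>S. d i x x = 0"
      using metric i by (auto simp: metric_on_def S_def)
    have s1: "s \<ge> 1" using s .
    interpret R: rob S "A i" sg "\<lambda>b b'. d i b b' powr s" "eps powr s" "\<lambda>a b. u i (b(i := a))"
      "ambiguity_set N A d s eps i p"
    proof unfold_locales
      show "finite S" by (rule finS)
      show "finite (A i)" using fin i by blast
      show "\<forall>b\<in>S. sg b \<ge> 0" by (rule sg_nn)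
      show "(\<Sum>b\<in>S. sg b) = 1" by (rule sg_sum)
      show "\<forall>b\<in>S. \<forall>b'\<in>S. d i b b' powr s \<ge> 0" by simp
      show "\<forall>b\<in>S. d i b b powr s = 0" using dd by simp
      show "eps powr s \<ge> 0" by simp
    next
      fix q assume "q \<in> ambiguity_set N A d s eps i p"
      then show "(\<forall>b\<in>S. q b \<ge> 0) \<and> (\<Sum>b\<in>S. q b) = 1"
        by (simp add: ambiguity_set_def is_mixed_def S_def)
    next
      fix q and \<delta> :: real assume q: "q \<in> ambiguity_set N A d s eps i p" and \<delta>: "\<delta> > 0"
      have qm: "(\<forall>b\<in>S. q b \<ge> 0)" "(\<Sum>b\<in>S. q b) = 1" and W: "wasserstein S (d i) s sg q \<le> eps"
        using q by (auto simp: ambiguity_set_def is_mixed_def S_def sgeq)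
      show "\<exists>g. (\<forall>x\<in>S. \<forall>y\<in>S. g x y \<ge> 0) \<and> (\<forall>x\<in>S. (\<Sum>y\<in>S. g x y) = sg x)
        \<and> (\<forall>y\<in>S. (\<Sum>x\<in>S. g x y) = q y)
        \<and> (\<Sum>x\<in>S. \<Sum>y\<in>S. d i x y powr s * g x y) \<le> eps powr s + \<delta>"
        by (rule wass_approx[OF finS sg_sum sg_nn qm(2) qm(1) s eps W \<delta>])
    next
      fix g :: "(nat \<Rightarrow> 'a) \<Rightarrow> (nat \<Rightarrow> 'a) \<Rightarrow> real"
      assume g: "\<forall>x\<in>S. \<forall>y\<in>S. g x y \<ge> 0" "\<forall>x\<in>S. (\<Sum>y\<in>S. g x y) = sg x"
        and cost: "(\<Sum>x\<in>S. \<Sum>y\<in>S. d i x y powr s * g x y) \<le> eps powr s"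
      have "is_mixed S (\<lambda>y. \<Sum>x\<in>S. g x y)"
      proof -
        have "(\<Sum>y\<in>S. \<Sum>x\<in>S. g x y) = (\<Sum>x\<in>S. \<Sum>y\<in>S. g x y)" by (rule sum.swap)
        also have "\<dots> = 1" using g(2) sg_sum by simp
        finally show ?thesis using g(1) by (auto simp: is_mixed_def intro!: sum_nonneg)
      qed
      moreover have "wasserstein S (d i) s sg (\<lambda>y. \<Sum>x\<in>S. g x y) \<le> eps"
        by (rule wass_intro[OF finS dnn s eps g cost])
      ultimately show "(\<lambda>y. \<Sum>x\<in>S. g x y) \<in> ambiguity_set N A d s eps i p"
        by (simp add: ambiguity_set_def S_def sgeq)
    qed
    have RV: "R.RV pp = robust_value N A u d s eps i p pp" for pp
      unfolding R.RV_def R.UU_def by (simp add: robust_value_def U_def S_def)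
    have mi: "is_mixed (A i) (p i)" using mixed i by blast
    show ?thesis using R.abstract_main[OF mi] unfolding RV unfolding S_def sg_def by simp
  qed
  have "strategically_robust_eq N A u d s eps p \<longleftrightarrow>
      (\<forall>i<N. \<forall>pp. is_mixed (A i) pp \<longrightarrow> robust_value N A u d s eps i p pp \<le> robust_value N A u d s eps i p (p i))"
    (is "_ \<longleftrightarrow> ?P")
    unfolding strategically_robust_eq_def using mixed by blast
  then show ?thesis
  proof (simp only:, intro iffI allI impI)
    fix i assume H: ?P and i: "i < N"
    show "\<exists>(lam::real) (xi::(nat \<Rightarrow> 'a) \<Rightarrow> real) (tau::real) (om::'a \<Rightarrow> real) (ka::real)
              (eta::(nat \<Rightarrow> 'a) \<Rightarrow> (nat \<Rightarrow> 'a) \<Rightarrow> real).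
       (\<forall>a\<in>A i. om a + ka + (\<Sum>b\<in>opp_profiles N A i. \<Sum>b'\<in>opp_profiles N A i.
                                  eta b b' * u i (b'(i := a))) = 0) \<and>
       - (eps powr s) + tau + (\<Sum>b\<in>opp_profiles N A i. \<Sum>b'\<in>opp_profiles N A i.
                                  eta b b' * d i b b' powr s) = 0 \<and>
       (\<forall>b\<in>opp_profiles N A i. (\<Prod>j\<in>{..<N} - {i}. p j (b j))
                                   - (\<Sum>b'\<in>opp_profiles N A i. eta b b') = 0) \<and>
       perp tau lam \<and>
       (\<forall>a\<in>A i. perp (om a) (p i a)) \<and>
       (\<forall>b\<in>opp_profiles N A i. \<forall>b'\<in>opp_profiles N A i.
          perp (eta b b') (- xi b + (\<Sum>a\<in>A i. u i (b'(i := a)) * p i a) + lam * d i b b' powr s))"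
      by (rule key[OF i, THEN iffD1]) (use H i in blast)
  next
    fix pp i assume H: "\<forall>i<N. \<exists>(lam::real) (xi::(nat \<Rightarrow> 'a) \<Rightarrow> real) (tau::real) (om::'a \<Rightarrow> real) (ka::real)
              (eta::(nat \<Rightarrow> 'a) \<Rightarrow> (nat \<Rightarrow> 'a) \<Rightarrow> real).
       (\<forall>a\<in>A i. om a + ka + (\<Sum>b\<in>opp_profiles N A i. \<Sum>b'\<in>opp_profiles N A i.
                                  eta b b' * u i (b'(i := a))) = 0) \<and>
       - (eps powr s) + tau + (\<Sum>b\<in>opp_profiles N A i. \<Sum>b'\<in>opp_profiles N A i.
                                  eta b b' * d i b b' powr s) = 0 \<and>
       (\<forall>b\<in>opp_profiles N A i. (\<Prod>j\<in>{..<N} - {i}. p j (b j))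
                                   - (\<Sum>b'\<in>opp_profiles N A i. eta b b') = 0) \<and>
       perp tau lam \<and>
       (\<forall>a\<in>A i. perp (om a) (p i a)) \<and>
       (\<forall>b\<in>opp_profiles N A i. \<forall>b'\<in>opp_profiles N A i.
          perp (eta b b') (- xi b + (\<Sum>a\<in>A i. u i (b'(i := a)) * p i a) + lam * d i b b' powr s))"
      and i: "i < N" and pp: "is_mixed (A i) pp"
    have "\<forall>pp. is_mixed (A i) pp \<longrightarrow> robust_value N A u d s eps i p pp \<le> robust_value N A u d s eps i p (p i)"
      by (rule key[OF i, THEN iffD2]) (use H i in blast)
    then show "robust_value N A u d s eps i p pp \<le> robust_value N A u d s eps i p (p i)" using pp by blast
  qed
qed

end
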